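(* Let $x$ be an $n\times n$ matrix of indeterminates over $\mathbb{Z}$, let $\Delta_i(x)$ be the determinant of the matrix obtained from $x$ by removing the first $i$ rows and the first $i$ columns, and let $\Delta(x)=\prod_{i=1}^{n-1}\Delta_i(x)$. Let $W$ be the group of all $n\times n$ matrices obtained from the identity matrix $1_n$ by permuting its columns. Then there exist $w_0,\dots,w_N\in W$, elements $a_1(x),\dots,a_N(x)\in\mathbb{Z}[x,\Delta(x)^{-1}]$ and $1\times(n-1)$ vectors $b_1(x),\dots,b_N(x)\in\mathbb{Z}[x,\Delta(x)^{-1}]^{n-1}$ such that, setting $$s_i(x)=\begin{pmatrix}a_i(x)&b_i(x)\\0&1_{n-1}\end{pmatrix},$$ one has $$x=w_0\cdot s_1(x)\cdot w_1\cdot s_2(x)\cdot w_2\cdots s_N(x)\cdot w_N.$$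
   Context: $\mathbb{Z}[x,\Delta(x)^{-1}]$ denotes the polynomial ring over $\mathbb{Z}$ in the $n^2$ entries of $x$, localized at $\Delta(x)$; $1_{n-1}$ is the $(n-1)\times(n-1)$ identity matrix. *)

theory Defs
  imports "Jordan_Normal_Form.Determinant"
begin

text \<open>The ring Z[x] of integer polynomials in the n^2 entries of an n x n matrix,
  realised as the (injective) image in functions on rational matrices.\<close>
inductive_set int_polyfun :: "nat \<Rightarrow> (rat mat \<Rightarrow> rat) set" for n :: nat where
  const: "(\<lambda>x. of_int c) \<in> int_polyfun n"
| var: "i < n \<Longrightarrow> j < n \<Longrightarrow> (\<lambda>x. x $$ (i, j)) \<in> int_polyfun n"
| add: "p \<in> int_polyfun n \<Longrightarrow> q \<in> int_polyfun n \<Longrightarrow> (\<lambda>x. p x + q x) \<in> int_polyfun n"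
| mult: "p \<in> int_polyfun n \<Longrightarrow> q \<in> int_polyfun n \<Longrightarrow> (\<lambda>x. p x * q x) \<in> int_polyfun n"

definition Delta_i :: "nat \<Rightarrow> nat \<Rightarrow> rat mat \<Rightarrow> rat" where
  "Delta_i n i x = det (mat (n - i) (n - i) (\<lambda>(r, c). x $$ (r + i, c + i)))"

definition Delta :: "nat \<Rightarrow> rat mat \<Rightarrow> rat" where
  "Delta n x = (\<Prod>i\<in>{1..n-1}. Delta_i n i x)"

text \<open>Elements of Z[x, Delta(x)^-1], as functions on matrices with Delta(x) \<noteq> 0.\<close>
definition loc_fun :: "nat \<Rightarrow> (rat mat \<Rightarrow> rat) \<Rightarrow> bool" where
  "loc_fun n f \<longleftrightarrow> (\<exists>p \<in> int_polyfun n. \<exists>k::nat.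
      \<forall>x \<in> carrier_mat n n. Delta n x \<noteq> 0 \<longrightarrow> f x = p x / Delta n x ^ k)"

definition perm_mats :: "nat \<Rightarrow> rat mat set" where
  "perm_mats n = {mat n n (\<lambda>(r, c). if r = \<sigma> c then 1 else 0) | \<sigma>. \<sigma> permutes {..<n}}"

text \<open>The block matrix ((a, b), (0, 1_{n-1})), with b indexed by 0..n-2.\<close>
definition s_mat :: "nat \<Rightarrow> rat \<Rightarrow> (nat \<Rightarrow> rat) \<Rightarrow> rat mat" where
  "s_mat n a b = mat n n (\<lambda>(r, c).
     if r = 0 then (if c = 0 then a else b (c - 1))
     else if c = 0 then 0 else if r = c then 1 else 0)"

fun chain :: "(nat \<Rightarrow> rat mat) \<Rightarrow> (nat \<Rightarrow> rat mat) \<Rightarrow> nat \<Rightarrow> rat mat" where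
  "chain w s 0 = w 0"
| "chain w s (Suc N) = chain w s N * s (Suc N) * w (Suc N)"

end

theory Submission
  imports Defs
begin

lemma ipf_neg: "p \<in> int_polyfun n \<Longrightarrow> (\<lambda>x. - p x) \<in> int_polyfun n"
proof -
  assume p: "p \<in> int_polyfun n"
  have "(\<lambda>x. of_int (-1) * p x) \<in> int_polyfun n" by (rule int_polyfun.mult[OF int_polyfun.const p])
  thus ?thesis by simp
qed

lemma ipf_sub: "p \<in> int_polyfun n \<Longrightarrow> q \<in> int_polyfun n \<Longrightarrow> (\<lambda>x. p x - q x) \<in> int_polyfun n"
proof -
  assume p: "p \<in> int_polyfun n" and q: "q \<in> int_polyfun n"
  have "(\<lambda>x. p x + - q x) \<in> int_polyfun n" by (rule int_polyfun.add[OF p ipf_neg[OF q]])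
  thus ?thesis by simp
qed

lemma ipf_sum: "finite A \<Longrightarrow> (\<And>a. a \<in> A \<Longrightarrow> f a \<in> int_polyfun n) \<Longrightarrow> (\<lambda>x. \<Sum>a\<in>A. f a x) \<in> int_polyfun n"
proof (induction A rule: finite_induct)
  case empty
  have "(\<lambda>x. of_int 0) \<in> int_polyfun n" by (rule int_polyfun.const)
  thus ?case by simp
next
  case (insert a A)
  have "(\<lambda>x. f a x + (\<Sum>a\<in>A. f a x)) \<in> int_polyfun n"
    by (rule int_polyfun.add) (use insert in auto)
  thus ?case using insert by simp
qed

lemma ipf_prod: "finite A \<Longrightarrow> (\<And>a. a \<in> A \<Longrightarrow> f a \<in> int_polyfun n) \<Longrightarrow> (\<lambda>x. \<Prod>a\<in>A. f a x) \<in> int_polyfun n"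
proof (induction A rule: finite_induct)
  case empty
  have "(\<lambda>x. of_int 1) \<in> int_polyfun n" by (rule int_polyfun.const)
  thus ?case by simp
next
  case (insert a A)
  have "(\<lambda>x. f a x * (\<Prod>a\<in>A. f a x)) \<in> int_polyfun n"
    by (rule int_polyfun.mult) (use insert in auto)
  thus ?case using insert by simp
qed

lemma ipf_pow: "p \<in> int_polyfun n \<Longrightarrow> (\<lambda>x. p x ^ k) \<in> int_polyfun n"
proof (induction k)
  case 0
  have "(\<lambda>x. of_int 1) \<in> int_polyfun n" by (rule int_polyfun.const)
  thus ?case by simp
next
  case (Suc k)
  have "(\<lambda>x. p x * p x ^ k) \<in> int_polyfun n" by (rule int_polyfun.mult) (use Suc in auto)
  thus ?case by simp
qed

lemma ipf_det:
  assumes car: "\<And>x. B x \<in> carrier_mat m m"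
    and ent: "\<And>r c. r < m \<Longrightarrow> c < m \<Longrightarrow> (\<lambda>x. B x $$ (r,c)) \<in> int_polyfun n"
  shows "(\<lambda>x. det (B x)) \<in> int_polyfun n"
proof -
  have eq: "(\<lambda>x. det (B x)) = (\<lambda>x. \<Sum>p\<in>{p. p permutes {0..<m}}. signof p * (\<Prod>i=0..<m. B x $$ (i, p i)))"
    using det_def'[OF car] by auto
  have fin: "finite {p. p permutes {0..<m}}" by (rule finite_permutations) simp
  show ?thesis unfolding eq
  proof (rule ipf_sum[OF fin])
    fix p assume "p \<in> {p. p permutes {0..<m}}"
    hence pp: "p permutes {0..<m}" by simp
    have "(\<lambda>x. \<Prod>i=0..<m. B x $$ (i, p i)) \<in> int_polyfun n"
      by (rule ipf_prod) (use ent permutes_in_image[OF pp] in auto)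
    then show "(\<lambda>x. signof p * (\<Prod>i=0..<m. B x $$ (i, p i))) \<in> int_polyfun n"
      by (rule int_polyfun.mult[OF int_polyfun.const])
  qed
qed

definition DD :: "nat \<Rightarrow> nat \<Rightarrow> rat mat \<Rightarrow> rat mat" where
  "DD n i x = mat (n - i) (n - i) (\<lambda>(r, c). x $$ (r + i, c + i))"

lemma Delta_i_DD: "Delta_i n i x = det (DD n i x)"
  unfolding Delta_i_def DD_def by simp

lemma DD_carrier: "DD n i x \<in> carrier_mat (n-i) (n-i)"
  unfolding DD_def by simp

lemma ipf_DD: "r < n - i \<Longrightarrow> c < n - i \<Longrightarrow> (\<lambda>x. DD n i x $$ (r,c)) \<in> int_polyfun n"
  unfolding DD_def by (simp add: int_polyfun.var)

lemma ipf_Delta_i: "(\<lambda>x. Delta_i n i x) \<in> int_polyfun n"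
  unfolding Delta_i_DD by (rule ipf_det[OF DD_carrier ipf_DD])

lemma ipf_Delta: "(\<lambda>x. Delta n x) \<in> int_polyfun n"
  unfolding Delta_def by (rule ipf_prod) (auto intro: ipf_Delta_i)

lemma ipf_adj:
  assumes "r < n - i" "c < n - i"
  shows "(\<lambda>x. adj_mat (DD n i x) $$ (r,c)) \<in> int_polyfun n"
proof -
  have eq: "(\<lambda>x. adj_mat (DD n i x) $$ (r,c)) = (\<lambda>x. of_int ((-1)^(c+r)) * det (mat_delete (DD n i x) c r))"
    using assms by (auto simp: adj_mat_def cofactor_def DD_def)
  have "(\<lambda>x. det (mat_delete (DD n i x) c r)) \<in> int_polyfun n"
  proof (rule ipf_det)
    fix x show "mat_delete (DD n i x) c r \<in> carrier_mat (n - i - 1) (n - i - 1)"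
      by (rule mat_delete_carrier[OF DD_carrier])
  next
    fix r' c' assume "r' < n - i - 1" "c' < n - i - 1"
    thus "(\<lambda>x. mat_delete (DD n i x) c r $$ (r', c')) \<in> int_polyfun n"
      by (auto simp: mat_delete_def DD_def intro!: int_polyfun.var)
  qed
  thus ?thesis unfolding eq by (rule int_polyfun.mult[OF int_polyfun.const])
qed

lemma loc_poly: "p \<in> int_polyfun n \<Longrightarrow> loc_fun n p"
proof -
  assume p: "p \<in> int_polyfun n"
  have "\<forall>x\<in>carrier_mat n n. Delta n x \<noteq> 0 \<longrightarrow> p x = p x / Delta n x ^ 0" by simp
  with p show ?thesis unfolding loc_fun_def by blast
qed


lemma frac_add: "(d::rat) \<noteq> 0 \<Longrightarrow> p/d^k + q/d^l = (p*d^l + q*d^k)/d^(k+l)"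
  by (simp add: power_add field_simps)
lemma frac_mult: "(d::rat) \<noteq> 0 \<Longrightarrow> (p/d^k) * (q/d^l) = (p*q)/d^(k+l)"
  by (simp add: power_add)

lemma loc_add:
  assumes "loc_fun n f" "loc_fun n g"
  shows "loc_fun n (\<lambda>x. f x + g x)"
proof -
  obtain p k where p: "p \<in> int_polyfun n" and fk: "\<forall>x\<in>carrier_mat n n. Delta n x \<noteq> 0 \<longrightarrow> f x = p x / Delta n x ^ k"
    using assms(1) unfolding loc_fun_def by blast
  obtain q l where q: "q \<in> int_polyfun n" and gl: "\<forall>x\<in>carrier_mat n n. Delta n x \<noteq> 0 \<longrightarrow> g x = q x / Delta n x ^ l"
    using assms(2) unfolding loc_fun_def by blast
  have r: "(\<lambda>x. p x * Delta n x ^ l + q x * Delta n x ^ k) \<in> int_polyfun n"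
    by (rule int_polyfun.add[OF int_polyfun.mult[OF p ipf_pow[OF ipf_Delta]] int_polyfun.mult[OF q ipf_pow[OF ipf_Delta]]])
  have e: "\<forall>x\<in>carrier_mat n n. Delta n x \<noteq> 0 \<longrightarrow> f x + g x = (p x * Delta n x ^ l + q x * Delta n x ^ k) / Delta n x ^ (k + l)"
    proof (intro ballI impI)
    fix x assume "x \<in> carrier_mat n n" "Delta n x \<noteq> 0"
    thus "f x + g x = (p x * Delta n x ^ l + q x * Delta n x ^ k) / Delta n x ^ (k + l)"
      using fk gl frac_add[of "Delta n x" "p x" k "q x" l] by simp
  qed
  show ?thesis unfolding loc_fun_def by (rule bexI[OF exI[of _ "k+l"] r], rule e)
qed

lemma loc_mult:
  assumes "loc_fun n f" "loc_fun n g"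
  shows "loc_fun n (\<lambda>x. f x * g x)"
proof -
  obtain p k where p: "p \<in> int_polyfun n" and fk: "\<forall>x\<in>carrier_mat n n. Delta n x \<noteq> 0 \<longrightarrow> f x = p x / Delta n x ^ k"
    using assms(1) unfolding loc_fun_def by blast
  obtain q l where q: "q \<in> int_polyfun n" and gl: "\<forall>x\<in>carrier_mat n n. Delta n x \<noteq> 0 \<longrightarrow> g x = q x / Delta n x ^ l"
    using assms(2) unfolding loc_fun_def by blast
  have r: "(\<lambda>x. p x * q x) \<in> int_polyfun n"
    by (rule int_polyfun.mult[OF p q])
  have e: "\<forall>x\<in>carrier_mat n n. Delta n x \<noteq> 0 \<longrightarrow> f x * g x = (p x * q x) / Delta n x ^ (k + l)"
    proof (intro ballI impI)
    fix x assume "x \<in> carrier_mat n n" "Delta n x \<noteq> 0"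
    thus "f x * g x = (p x * q x) / Delta n x ^ (k + l)"
      using fk gl frac_mult[of "Delta n x" "p x" k "q x" l] by simp
  qed
  show ?thesis unfolding loc_fun_def by (rule bexI[OF exI[of _ "k+l"] r], rule e)
qed

lemma loc_sub:
  assumes "loc_fun n f" "loc_fun n g"
  shows "loc_fun n (\<lambda>x. f x - g x)"
proof -
  have "loc_fun n (\<lambda>x. of_int (-1))" by (rule loc_poly[OF int_polyfun.const])
  hence "loc_fun n (\<lambda>x. of_int (-1) * g x)" using assms(2) by (rule loc_mult)
  hence "loc_fun n (\<lambda>x. f x + of_int (-1) * g x)" using assms(1) loc_add by blast
  thus ?thesis by simp
qed

lemma loc_sum: "finite A \<Longrightarrow> (\<And>a. a \<in> A \<Longrightarrow> loc_fun n (f a)) \<Longrightarrow> loc_fun n (\<lambda>x. \<Sum>a\<in>A. f a x)"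
proof (induction A rule: finite_induct)
  case empty
  have "loc_fun n (\<lambda>x. of_int 0)" by (rule loc_poly[OF int_polyfun.const])
  thus ?case by simp
next
  case (insert a A)
  have "loc_fun n (\<lambda>x. f a x + (\<Sum>a\<in>A. f a x))"
    by (rule loc_add) (use insert in auto)
  thus ?case using insert by simp
qed

lemma Delta_i_n: "Delta_i n n x = 1"
proof -
  have "mat 0 0 (\<lambda>(r, c). x $$ (r + n, c + n)) = (1\<^sub>m 0 :: rat mat)" by (rule eq_matI) auto
  thus ?thesis unfolding Delta_i_def by simp
qed

lemma Delta_i_nz: "Delta n x \<noteq> 0 \<Longrightarrow> 1 \<le> i \<Longrightarrow> i \<le> n \<Longrightarrow> Delta_i n i x \<noteq> 0"
proof (cases "i = n")
  case True thus ?thesis by (simp add: Delta_i_n)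
next
  case False
  assume "Delta n x \<noteq> 0" "1 \<le> i" "i \<le> n"
  with False show ?thesis unfolding Delta_def by (auto simp: prod_zero_iff)
qed

lemma loc_div:
  assumes p: "p \<in> int_polyfun n" and i: "1 \<le> i" "i \<le> n"
  shows "loc_fun n (\<lambda>x. p x / Delta_i n i x)"
proof (cases "i = n")
  case True
  thus ?thesis using loc_poly[OF p] by (simp add: Delta_i_n)
next
  case False
  define Q where "Q x = (\<Prod>j\<in>{1..n-1} - {i}. Delta_i n j x)" for x
  have Q: "Q \<in> int_polyfun n" unfolding Q_def[abs_def] by (rule ipf_prod) (auto intro: ipf_Delta_i)
  have D: "Delta n x = Delta_i n i x * Q x" for x
    unfolding Delta_def Q_def using i False by (subst prod.remove[of _ i]) auto
  have e: "\<forall>x\<in>carrier_mat n n. Delta n x \<noteq> 0 \<longrightarrow> p x / Delta_i n i x = (p x * Q x) / Delta n x ^ 1"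
    by (auto simp: D)
  have r: "(\<lambda>x. p x * Q x) \<in> int_polyfun n" by (rule int_polyfun.mult[OF p Q])
  show ?thesis unfolding loc_fun_def by (rule bexI[OF exI[of _ 1] r], rule e)
qed

definition uu :: "nat \<Rightarrow> nat \<Rightarrow> rat mat \<Rightarrow> nat \<Rightarrow> rat" where
  "uu n k x r = (\<Sum>j<n - Suc k. x $$ (k, j + Suc k) * adj_mat (DD n (Suc k) x) $$ (j, r)) / det (DD n (Suc k) x)"

definition vv :: "nat \<Rightarrow> nat \<Rightarrow> rat mat \<Rightarrow> nat \<Rightarrow> rat" where
  "vv n k x c = (if k < c then uu n k x (c - Suc k)
     else x $$ (k, c) - (\<Sum>r<n - Suc k. uu n k x r * x $$ (r + Suc k, c)))"

lemma loc_uu: assumes "k < n" "r < n - Suc k" shows "loc_fun n (\<lambda>x. uu n k x r)"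
proof -
  have num: "(\<lambda>x. \<Sum>j<n - Suc k. x $$ (k, j + Suc k) * adj_mat (DD n (Suc k) x) $$ (j, r)) \<in> int_polyfun n"
  proof (rule ipf_sum)
    fix j assume "j \<in> {..<n - Suc k}"
    hence j: "j < n - Suc k" by simp
    show "(\<lambda>x. x $$ (k, j + Suc k) * adj_mat (DD n (Suc k) x) $$ (j, r)) \<in> int_polyfun n"
      by (rule int_polyfun.mult[OF int_polyfun.var ipf_adj]) (use assms j in auto)
  qed simp
  have "loc_fun n (\<lambda>x. (\<Sum>j<n - Suc k. x $$ (k, j + Suc k) * adj_mat (DD n (Suc k) x) $$ (j, r)) / Delta_i n (Suc k) x)"
    by (rule loc_div[OF num]) (use assms in auto)
  thus ?thesis unfolding uu_def Delta_i_DD .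
qed

lemma loc_vv: assumes "k < n" "c < n" shows "loc_fun n (\<lambda>x. vv n k x c)"
proof (cases "k < c")
  case True
  thus ?thesis unfolding vv_def using loc_uu[of k n "c - Suc k"] assms by simp
next
  case False
  have s: "loc_fun n (\<lambda>x. \<Sum>r<n - Suc k. uu n k x r * x $$ (r + Suc k, c))"
  proof (rule loc_sum)
    fix r assume "r \<in> {..<n - Suc k}"
    hence r: "r < n - Suc k" by simp
    show "loc_fun n (\<lambda>x. uu n k x r * x $$ (r + Suc k, c))"
      by (rule loc_mult[OF loc_uu loc_poly[OF int_polyfun.var]]) (use assms r in auto)
  qed simp
  have "loc_fun n (\<lambda>x. x $$ (k, c) - (\<Sum>r<n - Suc k. uu n k x r * x $$ (r + Suc k, c)))"
    by (rule loc_sub[OF loc_poly[OF int_polyfun.var] s]) (use assms in auto)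
  thus ?thesis unfolding vv_def using False by simp
qed

lemma key:
  assumes x: "x \<in> carrier_mat n n" and k: "k < c" "c < n" and d: "det (DD n (Suc k) x) \<noteq> 0"
  shows "(\<Sum>r<n - Suc k. uu n k x r * x $$ (r + Suc k, c)) = x $$ (k, c)"
proof -
  define m where "m = n - Suc k"
  define D where "D = DD n (Suc k) x"
  define A where "A = adj_mat D"
  define dd where "dd = det D"
  define c' where "c' = c - Suc k"
  have Dc: "D \<in> carrier_mat m m" unfolding D_def m_def by (rule DD_carrier)
  have c': "c' < m" "c' + Suc k = c" unfolding c'_def m_def using k by auto
  have AD: "A * D = dd \<cdot>\<^sub>m 1\<^sub>m m" unfolding A_def dd_def by (rule adj_mat(3)[OF Dc])
  have Ac: "A \<in> carrier_mat m m" unfolding A_def by (rule adj_mat(1)[OF Dc])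
  have ADj: "(\<Sum>r<m. A $$ (j,r) * x $$ (r + Suc k, c)) = (if j = c' then dd else 0)" if j: "j < m" for j
  proof -
    have "(A * D) $$ (j, c') = (dd \<cdot>\<^sub>m 1\<^sub>m m) $$ (j, c')" using AD by simp
    moreover have "(A * D) $$ (j, c') = (\<Sum>r<m. A $$ (j,r) * D $$ (r, c'))"
      using Ac Dc j c' by (simp add: scalar_prod_def atLeast0LessThan)
    moreover have "\<And>r. r < m \<Longrightarrow> D $$ (r, c') = x $$ (r + Suc k, c)"
      unfolding D_def DD_def using c' by (simp add: m_def)
    ultimately show ?thesis using j c' by simp
  qed
  have "(\<Sum>r<m. uu n k x r * x $$ (r + Suc k, c))
      = (\<Sum>r<m. (\<Sum>j<m. x $$ (k, j + Suc k) * A $$ (j, r) * x $$ (r + Suc k, c)) / dd)"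
    unfolding uu_def m_def[symmetric] D_def[symmetric] A_def[symmetric] dd_def[symmetric]
    by (simp add: sum_distrib_right sum_divide_distrib)
  also have "\<dots> = (\<Sum>r<m. \<Sum>j<m. x $$ (k, j + Suc k) * A $$ (j, r) * x $$ (r + Suc k, c)) / dd"
    by (simp add: sum_divide_distrib)
  also have "\<dots> = (\<Sum>j<m. \<Sum>r<m. x $$ (k, j + Suc k) * A $$ (j, r) * x $$ (r + Suc k, c)) / dd"
    by (subst sum.swap) (rule refl)
  also have "\<dots> = (\<Sum>j<m. x $$ (k, j + Suc k) * (\<Sum>r<m. A $$ (j, r) * x $$ (r + Suc k, c))) / dd"
    by (simp add: sum_distrib_left mult.assoc)
  also have "\<dots> = (\<Sum>j<m. x $$ (k, j + Suc k) * (if j = c' then dd else 0)) / dd"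
  proof -
    have "x $$ (k, j + Suc k) * (\<Sum>r<m. A $$ (j, r) * x $$ (r + Suc k, c)) = x $$ (k, j + Suc k) * (if j = c' then dd else 0)" if "j \<in> {..<m}" for j
      using ADj[of j] that by simp
    thus ?thesis by (intro arg_cong[where f="\<lambda>t. t / dd"] sum.cong refl)
  qed
  also have "\<dots> = (\<Sum>j<m. if j = c' then x $$ (k, c' + Suc k) * dd else 0) / dd"
    by (intro arg_cong[where f="\<lambda>t. t / dd"] sum.cong refl) auto
  also have "\<dots> = x $$ (k, c' + Suc k) * dd / dd"
    using c' by (subst sum.delta) auto
  also have "\<dots> = x $$ (k, c)"
    using c' d by (simp add: dd_def D_def)
  finally show ?thesis unfolding m_def .
qed

lemma sum_split:
  assumes h: "Suc k \<le> n"
  shows "(\<Sum>i<n. f i) = (\<Sum>i<Suc k. f i) + (\<Sum>r<n - Suc k. f (r + Suc k))"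
proof -
  have eq: "{..<n} = {..<Suc k} \<union> {Suc k..<n}" using h by auto
  have "(\<Sum>i<n. f i) = sum f ({..<Suc k} \<union> {Suc k..<n})" by (simp only: eq)
  also have "\<dots> = (\<Sum>i<Suc k. f i) + (\<Sum>i\<in>{Suc k..<n}. f i)"
    by (rule sum.union_disjoint) auto
  finally have "(\<Sum>i<n. f i) = (\<Sum>i<Suc k. f i) + (\<Sum>i\<in>{Suc k..<n}. f i)" .
  moreover have "(\<Sum>i\<in>{Suc k..<n}. f i) = (\<Sum>r<n - Suc k. f (r + Suc k))"
    by (rule sum.reindex_bij_witness[of _ "\<lambda>r. r + Suc k" "\<lambda>i. i - Suc k"]) auto
  ultimately show ?thesis by simp
qed

definition Rmat :: "nat \<Rightarrow> nat \<Rightarrow> (nat \<Rightarrow> rat) \<Rightarrow> rat mat" where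
  "Rmat n k v = mat n n (\<lambda>(r, c). if r = k then v c else if r = c then 1 else 0)"

definition Mk :: "nat \<Rightarrow> nat \<Rightarrow> rat mat \<Rightarrow> rat mat" where
  "Mk n k x = mat n n (\<lambda>(r, c). if r < k then (if r = c then 1 else 0) else x $$ (r, c))"

lemma Rmat_carrier: "Rmat n k v \<in> carrier_mat n n" unfolding Rmat_def by simp
lemma Mk_carrier: "Mk n k x \<in> carrier_mat n n" unfolding Mk_def by simp

lemma stepA:
  assumes x: "x \<in> carrier_mat n n" and k: "k < n" and d: "det (DD n (Suc k) x) \<noteq> 0"
  shows "Rmat n k (vv n k x) * Mk n (Suc k) x = Mk n k x"
proof (rule eq_matI)
  show "dim_row (Rmat n k (vv n k x) * Mk n (Suc k) x) = dim_row (Mk n k x)" by (simp add: Rmat_def Mk_def)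
  show "dim_col (Rmat n k (vv n k x) * Mk n (Suc k) x) = dim_col (Mk n k x)" by (simp add: Rmat_def Mk_def)
  fix r c assume "r < dim_row (Mk n k x)" and "c < dim_col (Mk n k x)"
  hence r: "r < n" and c: "c < n" by (simp_all add: Mk_def)
  define R where "R = Rmat n k (vv n k x)"
  define M where "M = Mk n (Suc k) x"
  have e: "(R * M) $$ (r, c) = (\<Sum>i<n. R $$ (r, i) * M $$ (i, c))"
    using r c by (simp add: R_def M_def Rmat_def Mk_def scalar_prod_def atLeast0LessThan)
  have "(R * M) $$ (r, c) = Mk n k x $$ (r, c)"
  proof (cases "r = k")
    case False
    have "(\<Sum>i<n. R $$ (r, i) * M $$ (i, c)) = (\<Sum>i<n. if i = r then M $$ (r, c) else 0)"
      by (rule sum.cong) (use r False in \<open>auto simp: R_def Rmat_def\<close>)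
    also have "\<dots> = M $$ (r, c)" using r by (subst sum.delta) auto
    also have "\<dots> = Mk n k x $$ (r, c)" using r c False by (simp add: M_def Mk_def)
    finally show ?thesis using e by simp
  next
    case True
    define S where "S = (\<Sum>r<n - Suc k. uu n k x r * x $$ (r + Suc k, c))"
    have s1: "(\<Sum>i<n. R $$ (k, i) * M $$ (i, c)) = (\<Sum>i<n. vv n k x i * M $$ (i, c))"
      by (rule sum.cong) (auto simp: R_def Rmat_def k)
    have s2: "(\<Sum>i<n. vv n k x i * M $$ (i, c)) = (\<Sum>i<Suc k. vv n k x i * M $$ (i, c))
        + (\<Sum>r<n - Suc k. vv n k x (r + Suc k) * M $$ (r + Suc k, c))"
      by (rule sum_split) (use k in simp)
    have s3: "(\<Sum>i<Suc k. vv n k x i * M $$ (i, c)) = (\<Sum>i<Suc k. if i = c then vv n k x c else 0)"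
      by (rule sum.cong) (use k c in \<open>auto simp: M_def Mk_def\<close>)
    have s4: "(\<Sum>i<Suc k. if i = c then vv n k x c else 0) = (if c < Suc k then vv n k x c else 0)"
      by (subst sum.delta) auto
    have s5: "(\<Sum>r<n - Suc k. vv n k x (r + Suc k) * M $$ (r + Suc k, c)) = S"
      unfolding S_def by (rule sum.cong) (use c in \<open>auto simp: M_def Mk_def vv_def\<close>)
    have tot: "(R * M) $$ (r, c) = (if c < Suc k then vv n k x c else 0) + S"
      using e True s1 s2 s3 s4 s5 by simp
    show ?thesis
    proof (cases "c < Suc k")
      case True
      thus ?thesis using tot \<open>r = k\<close> r c by (simp add: vv_def S_def Mk_def)
    next
      case False
      have "S = x $$ (k, c)" unfolding S_def by (rule key[OF x _ c d]) (use False in simp)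
      thus ?thesis using tot \<open>r = k\<close> False r c by (simp add: Mk_def)
    qed
  qed
  thus "(Rmat n k (vv n k x) * Mk n (Suc k) x) $$ (r, c) = Mk n k x $$ (r, c)"
    unfolding R_def M_def .
qed

lemma Mk0: "x \<in> carrier_mat n n \<Longrightarrow> Mk n 0 x = x"
  by (rule eq_matI) (auto simp: Mk_def)

lemma Mkn: "Mk n n x = 1\<^sub>m n"
  by (rule eq_matI) (auto simp: Mk_def)

fun PR :: "nat \<Rightarrow> rat mat \<Rightarrow> nat \<Rightarrow> rat mat" where
  "PR n x 0 = 1\<^sub>m n"
| "PR n x (Suc j) = PR n x j * Rmat n j (vv n j x)"

lemma PR_carrier: "PR n x j \<in> carrier_mat n n"
  by (induction j) (auto simp: Rmat_carrier)

lemma PR_Mk: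
  assumes x: "x \<in> carrier_mat n n" and d: "\<forall>k<n. det (DD n (Suc k) x) \<noteq> 0"
  shows "j \<le> n \<Longrightarrow> PR n x j * Mk n j x = x"
proof (induction j)
  case 0
  thus ?case using x by (simp add: Mk0)
next
  case (Suc j)
  have "PR n x (Suc j) * Mk n (Suc j) x = PR n x j * (Rmat n j (vv n j x) * Mk n (Suc j) x)"
    by (simp add: assoc_mult_mat[OF PR_carrier Rmat_carrier Mk_carrier])
  also have "\<dots> = PR n x j * Mk n j x" using Suc.prems d by (simp add: stepA[OF x])
  also have "\<dots> = x" using Suc by simp
  finally show ?case .
qed

abbreviation tr :: "nat \<Rightarrow> nat \<Rightarrow> nat" where "tr k \<equiv> Transposition.transpose 0 k"

definition Pm :: "nat \<Rightarrow> nat \<Rightarrow> rat mat" where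
  "Pm n k = mat n n (\<lambda>(r, c). if r = tr k c then 1 else 0)"

lemma Pm_carrier: "Pm n k \<in> carrier_mat n n" unfolding Pm_def by simp

lemma Pm_perm: "k < n \<Longrightarrow> Pm n k \<in> perm_mats n"
  unfolding Pm_def perm_mats_def
  by (rule CollectI, rule exI[of _ "tr k"]) (auto intro: permutes_swap_id)

lemma tr_lt: "k < n \<Longrightarrow> r < n \<Longrightarrow> tr k r < n"
  by (auto simp: Transposition.transpose_def)

lemma tr_iff: "(r = tr k i) = (i = tr k r)"
  by (auto simp: Transposition.transpose_def)

lemma Pm_left:
  assumes A: "A \<in> carrier_mat n n" and k: "k < n"
  shows "Pm n k * A = mat n n (\<lambda>(r, c). A $$ (tr k r, c))"
proof (rule eq_matI)
  fix r c assume "r < dim_row (mat n n (\<lambda>(r, c). A $$ (tr k r, c)))" "c < dim_col (mat n n (\<lambda>(r, c). A $$ (tr k r, c)))"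
  hence r: "r < n" and c: "c < n" by auto
  have "(Pm n k * A) $$ (r, c) = (\<Sum>i<n. Pm n k $$ (r, i) * A $$ (i, c))"
    using r c A by (simp add: Pm_def scalar_prod_def atLeast0LessThan)
  also have "\<dots> = (\<Sum>i<n. if i = tr k r then A $$ (tr k r, c) else 0)"
    by (rule sum.cong) (use r in \<open>auto simp: Pm_def tr_iff\<close>)
  also have "\<dots> = A $$ (tr k r, c)" using tr_lt[OF k r] by (subst sum.delta) auto
  finally show "(Pm n k * A) $$ (r, c) = mat n n (\<lambda>(r, c). A $$ (tr k r, c)) $$ (r, c)"
    using r c by simp
qed (use A in \<open>auto simp: Pm_def\<close>)

lemma Pm_right:
  assumes A: "A \<in> carrier_mat n n" and k: "k < n"
  shows "A * Pm n k = mat n n (\<lambda>(r, c). A $$ (r, tr k c))"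
proof (rule eq_matI)
  fix r c assume "r < dim_row (mat n n (\<lambda>(r, c). A $$ (r, tr k c)))" "c < dim_col (mat n n (\<lambda>(r, c). A $$ (r, tr k c)))"
  hence r: "r < n" and c: "c < n" by auto
  have "(A * Pm n k) $$ (r, c) = (\<Sum>i<n. A $$ (r, i) * Pm n k $$ (i, c))"
    using r c A by (simp add: Pm_def scalar_prod_def atLeast0LessThan)
  also have "\<dots> = (\<Sum>i<n. if i = tr k c then A $$ (r, tr k c) else 0)"
    by (rule sum.cong) (use c in \<open>auto simp: Pm_def\<close>)
  also have "\<dots> = A $$ (r, tr k c)" using tr_lt[OF k c] by (subst sum.delta) auto
  finally show "(A * Pm n k) $$ (r, c) = mat n n (\<lambda>(r, c). A $$ (r, tr k c)) $$ (r, c)"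
    using r c by simp
qed (use A in \<open>auto simp: Pm_def\<close>)

lemma s_carrier: "s_mat n a b \<in> carrier_mat n n" unfolding s_mat_def by simp

lemma conj:
  assumes k: "k < n"
  shows "Pm n k * s_mat n (v k) (\<lambda>j. v (tr k (Suc j))) * Pm n k = Rmat n k v"
proof -
  have "Pm n k * s_mat n (v k) (\<lambda>j. v (tr k (Suc j))) * Pm n k
     = mat n n (\<lambda>(r, c). s_mat n (v k) (\<lambda>j. v (tr k (Suc j))) $$ (tr k r, c)) * Pm n k"
    by (simp add: Pm_left[OF s_carrier k])
  also have "\<dots> = mat n n (\<lambda>(r, c). mat n n (\<lambda>(r, c). s_mat n (v k) (\<lambda>j. v (tr k (Suc j))) $$ (tr k r, c)) $$ (r, tr k c))"
    by (rule Pm_right[OF _ k]) simp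
  also have "\<dots> = Rmat n k v"
  proof (rule eq_matI)
    fix r c assume "r < dim_row (Rmat n k v)" "c < dim_col (Rmat n k v)"
    hence r: "r < n" and c: "c < n" by (auto simp: Rmat_def)
    show "mat n n (\<lambda>(r, c). mat n n (\<lambda>(r, c). s_mat n (v k) (\<lambda>j. v (tr k (Suc j))) $$ (tr k r, c)) $$ (r, tr k c)) $$ (r, c) = Rmat n k v $$ (r, c)"
      using r c tr_lt[OF k r] tr_lt[OF k c] k
      by (auto simp: s_mat_def Rmat_def Transposition.transpose_def)
  qed (auto simp: Rmat_def)
  finally show ?thesis .
qed

lemma s_one: "s_mat n 1 (\<lambda>_. 0) = 1\<^sub>m n"
  by (rule eq_matI) (auto simp: s_mat_def)

definition Wf :: "nat \<Rightarrow> nat \<Rightarrow> rat mat" where "Wf n i = Pm n (i div 2)"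
definition Af :: "nat \<Rightarrow> nat \<Rightarrow> rat mat \<Rightarrow> rat" where
  "Af n i x = (if odd i then vv n (i div 2) x (i div 2) else 1)"
definition Bf :: "nat \<Rightarrow> nat \<Rightarrow> rat mat \<Rightarrow> nat \<Rightarrow> rat" where
  "Bf n i x j = (if odd i then vv n (i div 2) x (tr (i div 2) (Suc j)) else 0)"

lemma odd_facts:
  "Wf n (Suc (Suc (2*k+1))) = Pm n (Suc k)" "Wf n (Suc (2*k+1)) = Pm n (Suc k)"
  "Af n (Suc (2*k+1)) x = 1" "Bf n (Suc (2*k+1)) x = (\<lambda>j. 0)"
  "Af n (Suc (Suc (2*k+1))) x = vv n (Suc k) x (Suc k)"
  "Bf n (Suc (Suc (2*k+1))) x = (\<lambda>j. vv n (Suc k) x (tr (Suc k) (Suc j)))"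
  "Wf n (2*k+1) = Pm n k" "Af n (2*k+1) x = vv n k x k"
  "Bf n (2*k+1) x = (\<lambda>j. vv n k x (tr k (Suc j)))"
proof -
  have a: "Suc (Suc (2*k+1)) div 2 = Suc k" "Suc (2*k+1) div 2 = Suc k" "(2*k+1) div 2 = k" by presburger+
  have b: "odd (Suc (Suc (2*k+1)))" "\<not> odd (Suc (2*k+1))" "odd (2*k+1)" by presburger+
  show "Wf n (Suc (Suc (2*k+1))) = Pm n (Suc k)" "Wf n (Suc (2*k+1)) = Pm n (Suc k)"
    "Af n (Suc (2*k+1)) x = 1" "Bf n (Suc (2*k+1)) x = (\<lambda>j. 0)"
    "Af n (Suc (Suc (2*k+1))) x = vv n (Suc k) x (Suc k)"
    "Bf n (Suc (Suc (2*k+1))) x = (\<lambda>j. vv n (Suc k) x (tr (Suc k) (Suc j)))"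
    "Wf n (2*k+1) = Pm n k" "Af n (2*k+1) x = vv n k x k"
    "Bf n (2*k+1) x = (\<lambda>j. vv n k x (tr k (Suc j)))"
    unfolding Wf_def Af_def Bf_def[abs_def] a using b by (simp_all only: if_True if_False not_False_eq_True)
qed

lemma chain_PR:
  "k < n \<Longrightarrow> chain (Wf n) (\<lambda>i. s_mat n (Af n i x) (Bf n i x)) (2*k+1) = PR n x (Suc k)"
proof (induction k)
  case 0
  have w0: "Wf n 0 = Pm n 0" by (simp add: Wf_def)
  have "chain (Wf n) (\<lambda>i. s_mat n (Af n i x) (Bf n i x)) (2*0+1)
      = Pm n 0 * s_mat n (vv n 0 x 0) (\<lambda>j. vv n 0 x (tr 0 (Suc j))) * Pm n 0"
    using odd_facts(7)[where n=n and k=0] odd_facts(8)[where n=n and k=0 and x=x] odd_facts(9)[where n=n and k=0 and x=x] w0 by (simp del: transpose_same)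
  also have "\<dots> = Rmat n 0 (vv n 0 x)" by (rule conj) (use 0 in simp)
  also have "\<dots> = PR n x (Suc 0)" by (simp add: left_mult_one_mat[OF Rmat_carrier])
  finally show ?case by simp
next
  case (Suc k)
  define C where "C = PR n x (Suc k)"
  define P where "P = Pm n (Suc k)"
  define S where "S = s_mat n (vv n (Suc k) x (Suc k)) (\<lambda>j. vv n (Suc k) x (tr (Suc k) (Suc j)))"
  have Cc: "C \<in> carrier_mat n n" unfolding C_def by (rule PR_carrier)
  have Pc: "P \<in> carrier_mat n n" unfolding P_def by (rule Pm_carrier)
  have Sc: "S \<in> carrier_mat n n" unfolding S_def by (rule s_carrier)
  have "chain (Wf n) (\<lambda>i. s_mat n (Af n i x) (Bf n i x)) (2*Suc k+1)
      = chain (Wf n) (\<lambda>i. s_mat n (Af n i x) (Bf n i x)) (Suc (Suc (2*k+1)))" by simp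
  also have "\<dots> = C * 1\<^sub>m n * P * S * P"
    using Suc by (simp only: chain.simps odd_facts s_one C_def P_def S_def)
  also have "\<dots> = C * (P * S * P)"
    using Cc Pc Sc by (simp add: assoc_mult_mat[of _ n n _ n _ n])
  also have "P * S * P = Rmat n (Suc k) (vv n (Suc k) x)"
    unfolding P_def S_def by (rule conj) (use Suc in simp)
  finally show ?case unfolding C_def by simp
qed

theorem lemma3p9:
  fixes n :: nat
  assumes "n \<ge> 1"
  shows "\<exists>(N::nat) (w :: nat \<Rightarrow> rat mat) (a :: nat \<Rightarrow> rat mat \<Rightarrow> rat)
            (b :: nat \<Rightarrow> rat mat \<Rightarrow> nat \<Rightarrow> rat).
     (\<forall>i\<le>N. w i \<in> perm_mats n) \<and>
     (\<forall>i\<in>{1..N}. loc_fun n (a i) \<and> (\<forall>j<n-1. loc_fun n (\<lambda>x. b i x j))) \<and>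
     (\<forall>x \<in> carrier_mat n n. Delta n x \<noteq> 0 \<longrightarrow>
        x = chain w (\<lambda>i. s_mat n (a i x) (b i x)) N)"
proof -
  define N where "N = 2 * (n - 1) + 1"
  have h1: "\<forall>i\<le>N. Wf n i \<in> perm_mats n"
  proof (intro allI impI)
    fix i assume "i \<le> N"
    hence "i div 2 < n" using assms unfolding N_def by linarith
    thus "Wf n i \<in> perm_mats n" unfolding Wf_def by (rule Pm_perm)
  qed
  have h2: "\<forall>i\<in>{1..N}. loc_fun n (Af n i) \<and> (\<forall>j<n-1. loc_fun n (\<lambda>x. Bf n i x j))"
  proof (intro ballI conjI allI impI)
    fix i assume "i \<in> {1..N}"
    hence ik: "i div 2 < n" using assms unfolding N_def by auto
    show "loc_fun n (Af n i)"
    proof (cases "odd i")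
      case True
      have "Af n i = (\<lambda>x. vv n (i div 2) x (i div 2))" using True by (simp add: Af_def[abs_def])
      thus ?thesis using loc_vv[OF ik ik] by simp
    next
      case False
      have "Af n i = (\<lambda>x. of_int 1)" using False by (simp add: Af_def[abs_def])
      thus ?thesis using loc_poly[OF int_polyfun.const] by metis
    qed
    fix j assume j: "j < n - 1"
    show "loc_fun n (\<lambda>x. Bf n i x j)"
    proof (cases "odd i")
      case True
      have jj: "tr (i div 2) (Suc j) < n" using j ik by (intro tr_lt) auto
      have "(\<lambda>x. Bf n i x j) = (\<lambda>x. vv n (i div 2) x (tr (i div 2) (Suc j)))" using True by (simp add: Bf_def)
      thus ?thesis using loc_vv[OF ik jj] by simp
    next
      case False
      have "(\<lambda>x. Bf n i x j) = (\<lambda>x. of_int 0)" using False by (simp add: Bf_def)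
      thus ?thesis using loc_poly[OF int_polyfun.const] by metis
    qed
  qed
  have h3: "\<forall>x \<in> carrier_mat n n. Delta n x \<noteq> 0 \<longrightarrow>
        x = chain (Wf n) (\<lambda>i. s_mat n (Af n i x) (Bf n i x)) N"
  proof (intro ballI impI)
    fix x assume x: "x \<in> carrier_mat n n" and D: "Delta n x \<noteq> 0"
    have d: "\<forall>k<n. det (DD n (Suc k) x) \<noteq> 0"
      using Delta_i_nz[OF D] unfolding Delta_i_DD by auto
    have "chain (Wf n) (\<lambda>i. s_mat n (Af n i x) (Bf n i x)) N = PR n x (Suc (n - 1))"
      unfolding N_def by (rule chain_PR) (use assms in simp)
    also have "\<dots> = PR n x n" using assms by simp
    also have "\<dots> = PR n x n * Mk n n x" by (simp add: Mkn right_mult_one_mat[OF PR_carrier])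
    also have "\<dots> = x" by (rule PR_Mk[OF x d]) simp
    finally show "x = chain (Wf n) (\<lambda>i. s_mat n (Af n i x) (Bf n i x)) N" by simp
  qed
  show ?thesis
    by (rule exI[of _ N], rule exI[of _ "Wf n"], rule exI[of _ "Af n"], rule exI[of _ "Bf n"])
       (rule conjI[OF h1 conjI[OF h2 h3]])
qed

end
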